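(* Let $\alpha\in(0,1)$, let $J=[0,T]$ for some $T>0$ or $J=[0,\infty)$, and let $f:J\times\mathbb{R}\to\mathbb{R}$ be continuous and satisfy the Lipschitz condition: there is a continuous function $L:J\to[0,\infty)$ with $|f(t,x)-f(t,y)|\le L(t)|x-y|$ for all $t\in J$ and all $x,y\in\mathbb{R}$. Consider the one-dimensional fractional differential equation ${}^{C}D^\alpha_{0+}x(t)=f(t,x(t))$, $t\in J$. Then for any two initial values $x_{10}\neq x_{20}$ in $\mathbb{R}$, the solutions $x_1(\cdot),x_2(\cdot)$ with $x_1(0)=x_{10}$, $x_2(0)=x_{20}$ satisfy $x_1(t)\neq x_2(t)$ for all $t\in J$.
   Context: ${}^{C}D^\alpha_{0+}$ denotes the Caputo fractional derivative of order $\alpha\in(0,1)$: ${}^{C}D^\alpha_{0+}x(t)=\frac{1}{\Gamma(1-\alpha)}\int_0^t(t-\tau)^{-\alpha}x'(\tau)\,d\tau$. A solution is a continuous function $x:J\to\mathbb{R}$ satisfying the equation for all $0<t\in J$; equivalently, $x$ is continuous and $x(t)=x(0)+\frac{1}{\Gamma(\alpha)}\int_0^t(t-\tau)^{\alpha-1}f(\tau,x(\tau))\,d\tau$ for all $t\in J$. Under the stated Lipschitz condition, for each initial value there is a unique solution defined on all of $J$. *)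

theory Defs
  imports "HOL-Analysis.Analysis"
begin

text \<open>A solution of the Caputo fractional differential equation
  D^alpha x(t) = f(t, x(t)) on the interval J, in the (equivalent, as stated in
  the paper's context) Volterra integral form:
  x is continuous on J and for every t in J,
  x(t) = x(0) + 1/Gamma(alpha) * integral_0^t (t - s)^(alpha - 1) f(s, x(s)) ds.\<close>
definition caputo_solution ::
  "real \<Rightarrow> (real \<Rightarrow> real \<Rightarrow> real) \<Rightarrow> real set \<Rightarrow> (real \<Rightarrow> real) \<Rightarrow> bool" where
  "caputo_solution \<alpha> f J x \<longleftrightarrow>
     continuous_on J x \<and>
     (\<forall>t\<in>J. ((\<lambda>s. (t - s) powr (\<alpha> - 1) * f s (x s)) has_integral
                 (Gamma \<alpha> * (x t - x 0))) {0..t})"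

end

theory Submission
  imports Defs
begin

lemma kernel_int2:
  fixes a b c \<beta> :: real
  assumes "a \<le> c" "c \<le> b" "0 < \<beta>"
  shows "((\<lambda>r. (b - r) powr (\<beta> - 1)) has_integral (((b - a) powr \<beta> - (b - c) powr \<beta>) / \<beta>)) {a..c}"
proof -
  have "((\<lambda>r. (b - r) powr (\<beta> - 1)) has_integral ((\<lambda>r. - ((b - r) powr \<beta>) / \<beta>) c - (\<lambda>r. - ((b - r) powr \<beta>) / \<beta>) a)) {a..c}"
  proof (rule fundamental_theorem_of_calculus_interior[OF assms(1)])
    show "continuous_on {a..c} (\<lambda>r. - ((b - r) powr \<beta>) / \<beta>)"
      using assms by (intro continuous_intros continuous_on_powr') auto
    fix x assume x: "x \<in> {a<..<c}"
    show "((\<lambda>r. - ((b - r) powr \<beta>) / \<beta>) has_vector_derivative (b - x) powr (\<beta> - 1)) (at x)"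
      unfolding has_real_derivative_iff_has_vector_derivative[symmetric]
      using x assms by (auto intro!: derivative_eq_intros simp: field_simps)
  qed
  then show ?thesis by (simp add: diff_divide_distrib)
qed

lemma kernel_int:
  fixes a b \<beta> :: real
  assumes "a \<le> b" "0 < \<beta>"
  shows "((\<lambda>r. (b - r) powr (\<beta> - 1)) has_integral ((b - a) powr \<beta> / \<beta>)) {a..b}"
  using kernel_int2[OF assms(1) order.refl assms(2)] by simp

lemma wbound:
  fixes h k :: "real \<Rightarrow> real"
  assumes hc: "continuous_on {a..b} h" and kK: "(k has_integral K) {a..b}"
    and kpos: "\<And>r. r \<in> {a..b} \<Longrightarrow> 0 \<le> k r"
  shows "(\<lambda>r. k r * h r) absolutely_integrable_on {a..b}"
proof -
  have ka: "k absolutely_integrable_on {a..b}"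
    using kK kpos by (subst absolutely_integrable_on_iff_nonneg) (auto simp: has_integral_iff)
  have "(\<lambda>r. h r * k r) absolutely_integrable_on {a..b}"
  proof (rule absolutely_integrable_bounded_measurable_product_real[OF _ _ _ ka])
    show "h \<in> borel_measurable (lebesgue_on {a..b})"
      using hc by (intro continuous_imp_measurable_on_sets_lebesgue) auto
    show "bounded (h ` {a..b})"
      using hc by (intro compact_imp_bounded compact_continuous_image) auto
  qed auto
  then show ?thesis by (simp add: mult.commute)
qed

lemma wbound2:
  fixes h k :: "real \<Rightarrow> real"
  assumes hc: "continuous_on {a..b} h" and kK: "(k has_integral K) {a..b}"
    and kpos: "\<And>r. r \<in> {a..b} \<Longrightarrow> 0 \<le> k r"
    and hB: "\<And>r. r \<in> {a..b} \<Longrightarrow> \<bar>h r\<bar> \<le> B"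
  shows "\<bar>integral {a..b} (\<lambda>r. k r * h r)\<bar> \<le> K * B"
proof -
  have i: "(\<lambda>r. k r * h r) integrable_on {a..b}"
    using wbound[OF hc kK kpos] by (simp add: absolutely_integrable_on_def)
  have kB: "((\<lambda>r. k r * B) has_integral K * B) {a..b}"
    using has_integral_mult_left[OF kK] by simp
  have kB': "((\<lambda>r. - (k r * B)) has_integral - (K * B)) {a..b}"
    using has_integral_neg[OF kB] by simp
  have "integral {a..b} (\<lambda>r. k r * h r) \<le> K * B"
  proof (rule has_integral_le[OF integrable_integral[OF i] kB])
    fix r assume r: "r \<in> {a..b}"
    show "k r * h r \<le> k r * B" using hB[OF r] kpos[OF r] by (intro mult_left_mono) auto
  qed
  moreover have "- (K * B) \<le> integral {a..b} (\<lambda>r. k r * h r)"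
  proof (rule has_integral_le[OF kB' integrable_integral[OF i]])
    fix r assume r: "r \<in> {a..b}"
    have "k r * (- B) \<le> k r * h r" using hB[OF r] kpos[OF r] by (intro mult_left_mono) auto
    then show "- (k r * B) \<le> k r * h r" by simp
  qed
  ultimately show ?thesis by linarith
qed

lemma beta_int:
  fixes \<alpha> r t :: real
  assumes a: "0 < \<alpha>" "\<alpha> < 1" and rt: "r < t"
  shows "((\<lambda>s. (t - s) powr (-\<alpha>) * (s - r) powr (\<alpha> - 1)) has_integral Beta \<alpha> (1 - \<alpha>)) {r..t}"
proof -
  define m where "m = 1 / (t - r)"
  define c where "c = - r / (t - r)"
  have m: "m > 0" using rt by (simp add: m_def)
  have B: "((\<lambda>u. u powr (\<alpha> - 1) * (1 - u) powr ((1 - \<alpha>) - 1)) has_integral Beta \<alpha> (1 - \<alpha>)) (cbox 0 1)"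
    using has_integral_Beta_real[of \<alpha> "1 - \<alpha>"] a by simp
  have e0: "(0 - c) /\<^sub>R m = r" "(1 - c) /\<^sub>R m = t"
    "Beta \<alpha> (1 - \<alpha>) /\<^sub>R m ^ DIM(real) = Beta \<alpha> (1 - \<alpha>) * (t - r)"
    using rt by (auto simp: m_def c_def field_simps)
  have 1: "((\<lambda>x. (m * x + c) powr (\<alpha> - 1) * (1 - (m * x + c)) powr ((1 - \<alpha>) - 1)) has_integral
      Beta \<alpha> (1 - \<alpha>) * (t - r)) {r..t}"
    using has_integral_affinity'[OF B m, of c] unfolding e0 cbox_interval by simp
  have 2: "((\<lambda>x. (t - r) * ((t - x) powr (-\<alpha>) * (x - r) powr (\<alpha> - 1))) has_integral
      (t - r) * Beta \<alpha> (1 - \<alpha>)) {r..t}"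
  proof (rule has_integral_eq[OF _ 1[unfolded mult.commute[of "Beta _ _"]]])
    fix x assume x: "x \<in> {r..t}"
    have e1: "m * x + c = (x - r) / (t - r)" using rt by (simp add: m_def c_def diff_divide_distrib)
    have ne: "t - r \<noteq> 0" using rt by simp
    have e2: "1 - (x - r) / (t - r) = (t - x) / (t - r)" using ne
      by (simp add: field_simps)
    have e3: "(t - r) powr (\<alpha> - 1) * (t - r) powr (- \<alpha>) = 1 / (t - r)"
      using rt by (simp add: powr_diff powr_minus field_simps)
    have "(m * x + c) powr (\<alpha> - 1) * (1 - (m * x + c)) powr ((1 - \<alpha>) - 1)
        = ((x - r) powr (\<alpha> - 1) * (t - x) powr (- \<alpha>)) / ((t - r) powr (\<alpha> - 1) * (t - r) powr (- \<alpha>))"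
      using x rt unfolding e1 e2 by (simp add: powr_divide)
    also have "\<dots> = (t - r) * ((t - x) powr (-\<alpha>) * (x - r) powr (\<alpha> - 1))"
      unfolding e3 using rt by simp
    finally show "(m * x + c) powr (\<alpha> - 1) * (1 - (m * x + c)) powr ((1 - \<alpha>) - 1)
        = (t - r) * ((t - x) powr (-\<alpha>) * (x - r) powr (\<alpha> - 1))" .
  qed
  show ?thesis
    using 2 has_integral_cmul_iff[of "t - r" "\<lambda>s. (t - s) powr (-\<alpha>) * (s - r) powr (\<alpha> - 1)"] rt
    by simp
qed

lemma inner_int:
  fixes \<alpha> s :: real and h :: "real \<Rightarrow> real"
  assumes a: "0 < \<alpha>" and s: "0 \<le> s" and hc: "continuous_on {0..s} h"
  shows "(\<lambda>r. (s - r) powr (\<alpha> - 1) * h r) absolutely_integrable_on {0..s}"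
  by (rule wbound[OF hc kernel_int[OF s a, simplified]]) auto

lemma fub_nonneg:
  fixes \<alpha> t :: real and h :: "real \<Rightarrow> real"
  assumes a: "0 < \<alpha>" "\<alpha> < 1" and t: "0 \<le> t" and hc: "continuous_on UNIV h"
    and hpos: "\<And>r. 0 \<le> h r"
  shows "((\<lambda>s. (t - s) powr (-\<alpha>) * integral {0..s} (\<lambda>r. (s - r) powr (\<alpha> - 1) * h r))
          has_integral (Beta \<alpha> (1 - \<alpha>) * integral {0..t} h)) {0..t}"
proof -
  define k where "k s = integral {0..s} (\<lambda>r. (s - r) powr (\<alpha> - 1) * h r)" for s
  define B where "B = Beta \<alpha> (1 - \<alpha>)"
  have hm[measurable]: "h \<in> borel_measurable borel"
    using hc by (intro borel_measurable_continuous_onI) 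
  have kint: "((\<lambda>r. (s - r) powr (\<alpha> - 1) * h r) has_integral k s) {0..s}" if "0 \<le> s" for s
    using inner_int[OF a(1) that continuous_on_subset[OF hc]] unfolding k_def
    by (auto simp: absolutely_integrable_on_def)
  have kpos: "0 \<le> k s" if "0 \<le> s" for s
    using kint[OF that] hpos by (intro has_integral_nonneg[OF kint[OF that]]) auto
  have knn: "(\<integral>\<^sup>+r. ennreal (indicator {0..s} r * ((s - r) powr (\<alpha> - 1) * h r)) \<partial>lborel) = ennreal (k s)"
    if "0 \<le> s" for s
    by (rule nn_integral_has_integral_lebesgue[OF _ kint[OF that]]) (use hpos in auto)
  have Bpos: "0 < B" using a by (simp add: B_def Beta_def Gamma_real_pos)
  have bnn: "(\<integral>\<^sup>+s. ennreal (indicator {r..t} s * ((t - s) powr (-\<alpha>) * (s - r) powr (\<alpha> - 1))) \<partial>lborel) = ennreal B"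
    if "r < t" for r
    unfolding B_def by (rule nn_integral_has_integral_lebesgue[OF _ beta_int[OF a that]]) auto
  define F where "F s r = (if 0 \<le> s \<and> s \<le> t \<and> 0 \<le> r \<and> r \<le> s then
      (t - s) powr (-\<alpha>) * ((s - r) powr (\<alpha> - 1) * h r) else 0)" for s r
  have Fm: "(\<lambda>(s, r). ennreal (F s r)) \<in> borel_measurable (lborel \<Otimes>\<^sub>M lborel)"
    unfolding F_def by measurable
  have L1: "(\<integral>\<^sup>+s. ennreal (indicator {0..t} s * ((t - s) powr (-\<alpha>) * k s)) \<partial>lborel)
      = (\<integral>\<^sup>+s. (\<integral>\<^sup>+r. ennreal (F s r) \<partial>lborel) \<partial>lborel)"
  proof (rule nn_integral_cong)
    fix s :: real
    show "ennreal (indicator {0..t} s * ((t - s) powr (-\<alpha>) * k s)) = (\<integral>\<^sup>+r. ennreal (F s r) \<partial>lborel)"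
    proof (cases "0 \<le> s \<and> s \<le> t")
      case True
      have "(\<integral>\<^sup>+r. ennreal (F s r) \<partial>lborel) = (\<integral>\<^sup>+r. ennreal ((t - s) powr (-\<alpha>)) *
          ennreal (indicator {0..s} r * ((s - r) powr (\<alpha> - 1) * h r)) \<partial>lborel)"
        using True hpos by (intro nn_integral_cong) (auto simp: F_def indicator_def ennreal_mult[symmetric])
      also have "\<dots> = ennreal ((t - s) powr (-\<alpha>)) * ennreal (k s)"
        using True by (subst nn_integral_cmult) (auto simp: knn)
      also have "\<dots> = ennreal (indicator {0..t} s * ((t - s) powr (-\<alpha>) * k s))"
        using True kpos[of s] by (simp add: ennreal_mult[symmetric] indicator_def)
      finally show ?thesis by simp
    next
      case False
      then show ?thesis by (auto simp: F_def indicator_def)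
    qed
  qed
  have L2: "(\<integral>\<^sup>+s. (\<integral>\<^sup>+r. ennreal (F s r) \<partial>lborel) \<partial>lborel)
      = (\<integral>\<^sup>+r. (\<integral>\<^sup>+s. ennreal (F s r) \<partial>lborel) \<partial>lborel)"
    using lborel_pair.Fubini'[OF Fm] by simp
  have L3: "(\<integral>\<^sup>+r. (\<integral>\<^sup>+s. ennreal (F s r) \<partial>lborel) \<partial>lborel)
      = (\<integral>\<^sup>+r. ennreal (indicator {0..t} r * (B * h r)) \<partial>lborel)"
  proof (intro nn_integral_cong_AE eventually_mono[OF AE_lborel_singleton[of t]])
    fix r :: real assume rt: "r \<noteq> t"
    show "(\<integral>\<^sup>+s. ennreal (F s r) \<partial>lborel) = ennreal (indicator {0..t} r * (B * h r))"
    proof (cases "0 \<le> r \<and> r < t")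
      case True
      have "(\<integral>\<^sup>+s. ennreal (F s r) \<partial>lborel) = (\<integral>\<^sup>+s. ennreal (h r) *
          ennreal (indicator {r..t} s * ((t - s) powr (-\<alpha>) * (s - r) powr (\<alpha> - 1))) \<partial>lborel)"
        using True hpos by (intro nn_integral_cong) (auto simp: F_def indicator_def ennreal_mult[symmetric] mult_ac)
      also have "\<dots> = ennreal (h r) * ennreal B"
        using True by (subst nn_integral_cmult) (auto simp: bnn)
      also have "\<dots> = ennreal (indicator {0..t} r * (B * h r))"
        using True hpos[of r] Bpos by (simp add: ennreal_mult[symmetric] indicator_def mult_ac)
      finally show ?thesis .
    next
      case False
      with rt have "r < 0 \<or> t < r" by auto
      then have "\<And>s. F s r = 0" by (auto simp: F_def)
      then show ?thesis using False rt by (auto simp: indicator_def)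
    qed
  qed
  have hint: "((\<lambda>r. B * h r) has_integral B * integral {0..t} h) {0..t}"
    using integrable_continuous_interval[OF continuous_on_subset[OF hc]]
    by (intro has_integral_mult_right) (auto simp: has_integral_iff)
  have L4: "(\<integral>\<^sup>+r. ennreal (indicator {0..t} r * (B * h r)) \<partial>lborel) = ennreal (B * integral {0..t} h)"
    by (rule nn_integral_has_integral_lebesgue[OF _ hint]) (use hpos Bpos in auto)
  define g where "g s = indicator {0..t} s * ((t - s) powr (-\<alpha>) * k s)" for s
  define g' where "g' s = indicator {0..t} s * ((t - s) powr (-\<alpha>) *
     enn2real (\<integral>\<^sup>+r. ennreal (if 0 \<le> r \<and> r \<le> s then (s - r) powr (\<alpha> - 1) * h r else 0) \<partial>lborel))" for s
  have g'm: "g' \<in> borel_measurable borel" unfolding g'_def by measurable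
  have gg': "g' s = g s" for s
  proof -
    have "(\<integral>\<^sup>+r. ennreal (if 0 \<le> r \<and> r \<le> s then (s - r) powr (\<alpha> - 1) * h r else 0) \<partial>lborel)
      = (\<integral>\<^sup>+r. ennreal (indicator {0..s} r * ((s - r) powr (\<alpha> - 1) * h r)) \<partial>lborel)"
      by (intro nn_integral_cong) (auto simp: indicator_def)
    then show ?thesis
      unfolding g_def g'_def using knn[of s] kpos[of s] by (cases "0 \<le> s") (auto simp: indicator_def)
  qed
  have gm: "g \<in> borel_measurable borel"
    using g'm gg' by (metis ext)
  have intpos: "0 \<le> B * integral {0..t} h"
    using Bpos hpos by (intro mult_nonneg_nonneg integral_nonneg integrable_continuous_interval
        continuous_on_subset[OF hc]) auto
  have "(g has_integral B * integral {0..t} h) UNIV"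
  proof (rule nn_integral_has_integral[OF gm _ _ intpos])
    show "0 \<le> g x" for x unfolding g_def using kpos[of x] by (auto simp: indicator_def)
    show "(\<integral>\<^sup>+x. ennreal (g x) \<partial>lborel) = ennreal (B * integral {0..t} h)"
      unfolding g_def L1 L2 L3 L4 ..
  qed
  moreover have "g = (\<lambda>s. if s \<in> {0..t} then (t - s) powr (-\<alpha>) * k s else 0)"
    by (auto simp: g_def indicator_def fun_eq_iff)
  ultimately have X: "((\<lambda>s. if s \<in> {0..t} then (t - s) powr (-\<alpha>) * k s else 0) has_integral
      B * integral {0..t} h) UNIV" by simp
  show ?thesis using X unfolding has_integral_restrict_UNIV k_def B_def .
qed

lemma fub:
  fixes \<alpha> t :: real and h :: "real \<Rightarrow> real"
  assumes a: "0 < \<alpha>" "\<alpha> < 1" and t: "0 \<le> t" and hc: "continuous_on UNIV h"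
  shows "((\<lambda>s. (t - s) powr (-\<alpha>) * integral {0..s} (\<lambda>r. (s - r) powr (\<alpha> - 1) * h r))
          has_integral (Beta \<alpha> (1 - \<alpha>) * integral {0..t} h)) {0..t}"
proof -
  define hp where "hp r = max (h r) 0" for r
  define hn where "hn r = max (- h r) 0" for r
  have hpc: "continuous_on UNIV hp" unfolding hp_def using hc by (intro continuous_intros)
  have hnc: "continuous_on UNIV hn" unfolding hn_def using hc by (intro continuous_intros)
  have hdec: "h r = hp r - hn r" for r by (simp add: hp_def hn_def)
  have P: "((\<lambda>s. (t - s) powr (-\<alpha>) * integral {0..s} (\<lambda>r. (s - r) powr (\<alpha> - 1) * hp r))
          has_integral (Beta \<alpha> (1 - \<alpha>) * integral {0..t} hp)) {0..t}"
    by (rule fub_nonneg[OF a t hpc]) (simp add: hp_def)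
  have N: "((\<lambda>s. (t - s) powr (-\<alpha>) * integral {0..s} (\<lambda>r. (s - r) powr (\<alpha> - 1) * hn r))
          has_integral (Beta \<alpha> (1 - \<alpha>) * integral {0..t} hn)) {0..t}"
    by (rule fub_nonneg[OF a t hnc]) (simp add: hn_def)
  have eqs: "integral {0..s} (\<lambda>r. (s - r) powr (\<alpha> - 1) * h r) =
      integral {0..s} (\<lambda>r. (s - r) powr (\<alpha> - 1) * hp r) - integral {0..s} (\<lambda>r. (s - r) powr (\<alpha> - 1) * hn r)"
    if "0 \<le> s" for s
  proof -
    have i1: "(\<lambda>r. (s - r) powr (\<alpha> - 1) * hp r) integrable_on {0..s}"
      using inner_int[OF a(1) that continuous_on_subset[OF hpc]] by (auto simp: absolutely_integrable_on_def)
    have i2: "(\<lambda>r. (s - r) powr (\<alpha> - 1) * hn r) integrable_on {0..s}"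
      using inner_int[OF a(1) that continuous_on_subset[OF hnc]] by (auto simp: absolutely_integrable_on_def)
    show ?thesis
      unfolding hdec right_diff_distrib by (rule integral_diff[OF i1 i2])
  qed
  have ih: "integral {0..t} h = integral {0..t} hp - integral {0..t} hn"
    unfolding hdec[abs_def]
    by (rule integral_diff; rule integrable_continuous_interval; rule continuous_on_subset[OF _ subset_UNIV])
       (auto simp: hpc hnc)
  have "((\<lambda>s. (t - s) powr (-\<alpha>) * integral {0..s} (\<lambda>r. (s - r) powr (\<alpha> - 1) * hp r)
      - (t - s) powr (-\<alpha>) * integral {0..s} (\<lambda>r. (s - r) powr (\<alpha> - 1) * hn r))
     has_integral (Beta \<alpha> (1 - \<alpha>) * integral {0..t} h)) {0..t}"
    unfolding ih right_diff_distrib by (rule has_integral_diff[OF P N])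
  then show ?thesis
    by (rule has_integral_eq[rotated]) (simp add: eqs right_diff_distrib)
qed

lemma kernel_diff_bound:
  fixes \<alpha> \<rho> x y :: real
  assumes a: "0 < \<alpha>" "\<alpha> < 1" and \<rho>: "0 < \<rho>" "\<rho> \<le> x" and xy: "x \<le> y"
  shows "x powr (\<alpha> - 1) - y powr (\<alpha> - 1) \<le> (1 - \<alpha>) * \<rho> powr (\<alpha> - 2) * (y - x)"
proof (cases "x = y")
  case True then show ?thesis by simp
next
  case False
  with xy have lt: "x < y" by simp
  obtain z where z: "x < z" "z < y"
    and eq: "y powr (\<alpha> - 1) - x powr (\<alpha> - 1) = (y - x) * ((\<alpha> - 1) * z powr (\<alpha> - 1 - 1))"
  proof (rule exE[OF MVT2[OF lt, of "\<lambda>z. z powr (\<alpha> - 1)" "\<lambda>z. (\<alpha> - 1) * z powr (\<alpha> - 1 - 1)"]])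
    fix u assume "x \<le> u" "u \<le> y"
    then have "0 < u" using \<rho> by simp
    then show "((\<lambda>z. z powr (\<alpha> - 1)) has_real_derivative (\<alpha> - 1) * u powr (\<alpha> - 1 - 1)) (at u)"
      by (auto intro!: derivative_eq_intros)
  qed auto
  have zp: "z powr (\<alpha> - 2) \<le> \<rho> powr (\<alpha> - 2)"
    using z \<rho> a by (intro powr_mono2') auto
  have "x powr (\<alpha> - 1) - y powr (\<alpha> - 1) = (y - x) * ((1 - \<alpha>) * z powr (\<alpha> - 2))"
    using eq by (simp add: algebra_simps)
  also have "\<dots> \<le> (y - x) * ((1 - \<alpha>) * \<rho> powr (\<alpha> - 2))"
    using lt a zp by (intro mult_left_mono) auto
  finally show ?thesis by (simp add: mult_ac)
qed

lemma endpoint_est: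
  fixes \<alpha> t1 \<eta> :: real and h G :: "real \<Rightarrow> real"
  assumes a: "0 < \<alpha>" "\<alpha> < 1" and t1: "0 < t1" and hc: "continuous_on {0..t1} h"
    and h0: "h t1 = 0"
    and eq: "\<And>t. t \<in> {0..t1} \<Longrightarrow> ((\<lambda>s. (t - s) powr (\<alpha> - 1) * h s) has_integral G t) {0..t}"
    and \<eta>: "0 < \<eta>"
  shows "\<exists>\<delta>>0. \<forall>s\<in>{0..t1}. t1 - s < \<delta> \<longrightarrow> G s - G t1 \<le> \<eta> * (t1 - s) powr \<alpha>"
proof -
  obtain Mh0 where "\<forall>x\<in>h ` {0..t1}. \<bar>x\<bar> \<le> Mh0"
    using compact_imp_bounded[OF compact_continuous_image[OF hc compact_Icc]] unfolding bounded_real by blast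
  then have Mh0: "\<And>r. r \<in> {0..t1} \<Longrightarrow> \<bar>h r\<bar> \<le> Mh0" by auto
  define Mh where "Mh = max Mh0 0"
  have Mh: "\<And>r. r \<in> {0..t1} \<Longrightarrow> \<bar>h r\<bar> \<le> Mh" "0 \<le> Mh"
    using Mh0 by (auto simp: Mh_def le_max_iff_disj)
  define \<eta>1 where "\<eta>1 = \<eta> * \<alpha> / 4"
  have \<eta>1: "0 < \<eta>1" using \<eta> a by (simp add: \<eta>1_def)
  obtain \<rho>0 where \<rho>0: "0 < \<rho>0" and \<rho>0h: "\<And>r. r \<in> {0..t1} \<Longrightarrow> dist r t1 < \<rho>0 \<Longrightarrow> dist (h r) (h t1) < \<eta>1"
    using hc \<eta>1 t1 unfolding continuous_on_iff by (metis atLeastAtMost_iff less_le_not_le order.refl)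
  define \<rho> where "\<rho> = \<rho>0 / 3"
  have \<rho>: "0 < \<rho>" using \<rho>0 by (simp add: \<rho>_def)
  have hsmall: "\<bar>h r\<bar> \<le> \<eta>1" if "r \<in> {0..t1}" "t1 - r \<le> 2 * \<rho>" for r
  proof -
    have "dist r t1 < \<rho>0" using that \<rho>0 by (simp add: dist_real_def \<rho>_def)
    from \<rho>0h[OF that(1) this] show ?thesis by (simp add: h0 dist_real_def)
  qed
  define C1 where "C1 = Mh * t1 * (1 - \<alpha>) * \<rho> powr (\<alpha> - 2) + 1"
  have C1: "0 < C1" unfolding C1_def using Mh(2) t1 a by (intro add_nonneg_pos) auto
  define \<delta> where "\<delta> = min \<rho> ((\<eta> / (2 * C1)) powr (1 / (1 - \<alpha>)))"
  have \<delta>: "0 < \<delta>" using \<rho> \<eta> C1 by (simp add: \<delta>_def)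
  show ?thesis
  proof (intro exI[of _ \<delta>] conjI ballI impI \<delta>)
    fix s assume s: "s \<in> {0..t1}" and sd: "t1 - s < \<delta>"
    define \<epsilon> where "\<epsilon> = t1 - s"
    show "G s - G t1 \<le> \<eta> * (t1 - s) powr \<alpha>"
    proof (cases "s = t1")
      case True then show ?thesis by simp
    next
      case False
      then have \<epsilon>: "0 < \<epsilon>" using s by (simp add: \<epsilon>_def)
      have \<epsilon>\<rho>: "\<epsilon> < \<rho>" using sd by (simp add: \<epsilon>_def \<delta>_def)
      have s0: "0 \<le> s" "s \<le> t1" using s by auto
      have Is: "((\<lambda>r. (s - r) powr (\<alpha> - 1) * h r) has_integral G s) {0..s}" using eq s by simp
      have It: "((\<lambda>r. (t1 - r) powr (\<alpha> - 1) * h r) has_integral G t1) {0..t1}" using eq t1 by simp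
      define A1 where "A1 = integral {0..s} (\<lambda>r. (t1 - r) powr (\<alpha> - 1) * h r)"
      define A2 where "A2 = integral {s..t1} (\<lambda>r. (t1 - r) powr (\<alpha> - 1) * h r)"
      have itint: "(\<lambda>r. (t1 - r) powr (\<alpha> - 1) * h r) integrable_on {0..t1}" using It by blast
      have GA: "G t1 = A1 + A2"
        using Henstock_Kurzweil_Integration.integral_combine[OF s0 itint] It unfolding A1_def A2_def by (simp add: integral_unique)
      have i1: "(\<lambda>r. (t1 - r) powr (\<alpha> - 1) * h r) integrable_on {0..s}"
        by (rule integrable_subinterval_real[OF itint]) (use s0 in auto)
      have isint: "(\<lambda>r. (s - r) powr (\<alpha> - 1) * h r) integrable_on {0..s}" using Is by blast
      define q where "q r = (s - r) powr (\<alpha> - 1) - (t1 - r) powr (\<alpha> - 1)" for r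
      have qint: "(\<lambda>r. q r * h r) integrable_on {0..s}"
        unfolding q_def left_diff_distrib by (rule integrable_diff[OF isint i1])
      have GQ: "G s - G t1 = integral {0..s} (\<lambda>r. q r * h r) - A2"
        unfolding GA q_def left_diff_distrib A1_def
        using integral_diff[OF isint i1] Is by (simp add: integral_unique)
      have A2b: "\<bar>A2\<bar> \<le> \<epsilon> powr \<alpha> / \<alpha> * \<eta>1"
        unfolding A2_def \<epsilon>_def
      proof (rule wbound2[OF continuous_on_subset[OF hc] kernel_int[OF s0(2) a(1)]])
        show "{s..t1} \<subseteq> {0..t1}" using s0 by auto
        fix r assume r: "r \<in> {s..t1}"
        show "0 \<le> (t1 - r) powr (\<alpha> - 1)" by simp
        show "\<bar>h r\<bar> \<le> \<eta>1" using r s0 \<epsilon>\<rho> \<rho> by (intro hsmall) (auto simp: \<epsilon>_def)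
      qed
      define c where "c = max 0 (s - \<rho>)"
      have c: "0 \<le> c" "c \<le> s" using s0 \<rho> by (auto simp: c_def)
      have QQ: "integral {0..s} (\<lambda>r. q r * h r) = integral {0..c} (\<lambda>r. q r * h r) + integral {c..s} (\<lambda>r. q r * h r)"
        using Henstock_Kurzweil_Integration.integral_combine[OF c qint] by simp
      have Q1: "integral {0..c} (\<lambda>r. q r * h r) \<le> (C1 - 1) * \<epsilon>"
      proof (cases "s - \<rho> \<le> 0")
        case True
        then have "c = 0" by (simp add: c_def)
        then show ?thesis using C1_def Mh(2) t1 a \<epsilon> by (simp add: C1_def)
      next
        case False
        then have cc: "c = s - \<rho>" by (simp add: c_def)
        have qi: "((\<lambda>r. q r * h r) has_integral integral {0..c} (\<lambda>r. q r * h r)) {0..c}"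
          by (rule integrable_integral, rule integrable_subinterval_real[OF qint]) (use c in auto)
        have "norm (integral {0..c} (\<lambda>r. q r * h r)) \<le> (Mh * ((1 - \<alpha>) * \<rho> powr (\<alpha> - 2) * \<epsilon>)) * measure lborel {0..c}"
        proof (rule has_integral_bound_real[OF _ _ qi, where S="{}"])
          show "0 \<le> Mh * ((1 - \<alpha>) * \<rho> powr (\<alpha> - 2) * \<epsilon>)" using Mh(2) a \<epsilon> by simp
          fix r assume r: "r \<in> {0..c} - {}"
          have qb: "q r \<le> (1 - \<alpha>) * \<rho> powr (\<alpha> - 2) * \<epsilon>"
            unfolding q_def using kernel_diff_bound[OF a \<rho>, of "s - r" "t1 - r"] r cc s0
            by (simp add: \<epsilon>_def)
          have q0: "0 \<le> q r"
            unfolding q_def using r cc \<rho> s0 a by (simp add: powr_mono2')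
          have "\<bar>q r * h r\<bar> = q r * \<bar>h r\<bar>" using q0 by (simp add: abs_mult)
          also have "\<dots> \<le> ((1 - \<alpha>) * \<rho> powr (\<alpha> - 2) * \<epsilon>) * Mh"
            using r c s0 Mh q0 qb by (intro mult_mono) auto
          finally show "norm (q r * h r) \<le> Mh * ((1 - \<alpha>) * \<rho> powr (\<alpha> - 2) * \<epsilon>)"
            by (simp add: mult_ac)
        qed auto
        also have "\<dots> \<le> (Mh * ((1 - \<alpha>) * \<rho> powr (\<alpha> - 2) * \<epsilon>)) * t1"
          using c s0 Mh(2) a \<epsilon> by (intro mult_left_mono) auto
        also have "\<dots> = (C1 - 1) * \<epsilon>" by (simp add: C1_def mult_ac)
        finally show ?thesis by simp
      qed
      define qq where "qq r = (if r = s then 0 else q r)" for r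
      define Kq where "Kq = ((s - c) powr \<alpha> - (t1 - c) powr \<alpha> + \<epsilon> powr \<alpha>) / \<alpha>"
      have k1: "((\<lambda>r. (s - r) powr (\<alpha> - 1)) has_integral ((s - c) powr \<alpha> - (s - s) powr \<alpha>) / \<alpha>) {c..s}"
        by (rule kernel_int2) (use c a in auto)
      have k2: "((\<lambda>r. (t1 - r) powr (\<alpha> - 1)) has_integral ((t1 - c) powr \<alpha> - (t1 - s) powr \<alpha>) / \<alpha>) {c..s}"
        by (rule kernel_int2) (use c a s0 in auto)
      have kqe: "Kq = ((s - c) powr \<alpha> - (s - s) powr \<alpha>) / \<alpha> - ((t1 - c) powr \<alpha> - (t1 - s) powr \<alpha>) / \<alpha>"
        unfolding Kq_def \<epsilon>_def using a by (simp add: field_simps)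
      have kq: "(q has_integral Kq) {c..s}"
        using has_integral_diff[OF k1 k2] unfolding q_def[abs_def] kqe .
      have kqq: "(qq has_integral Kq) {c..s}"
        by (rule has_integral_spike[OF negligible_sing _ kq, of s]) (auto simp: qq_def)
      have Kqb: "Kq \<le> \<epsilon> powr \<alpha> / \<alpha>"
      proof -
        have "(s - c) powr \<alpha> \<le> (t1 - c) powr \<alpha>" using c s0 a by (intro powr_mono2) auto
        then show ?thesis unfolding Kq_def using a by (simp add: divide_right_mono)
      qed
      have Q2a: "\<bar>integral {c..s} (\<lambda>r. qq r * h r)\<bar> \<le> Kq * \<eta>1"
      proof (rule wbound2[OF continuous_on_subset[OF hc] kqq])
        show "{c..s} \<subseteq> {0..t1}" using c s0 by auto
        fix r assume r: "r \<in> {c..s}"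
        show "0 \<le> qq r"
          unfolding qq_def q_def using r a s0 by (auto intro!: powr_mono2')
        show "\<bar>h r\<bar> \<le> \<eta>1"
        proof (rule hsmall)
          show "r \<in> {0..t1}" using r c s0 by auto
          have "t1 - c \<le> \<epsilon> + \<rho>" by (simp add: c_def \<epsilon>_def)
          then show "t1 - r \<le> 2 * \<rho>" using r \<epsilon>\<rho> by auto
        qed
      qed
      have Q2e: "integral {c..s} (\<lambda>r. q r * h r) = integral {c..s} (\<lambda>r. qq r * h r)"
        by (rule integral_spike[OF negligible_sing[of s]]) (auto simp: qq_def)
      have Q2: "integral {c..s} (\<lambda>r. q r * h r) \<le> \<epsilon> powr \<alpha> / \<alpha> * \<eta>1"
        using Q2a Q2e Kqb \<eta>1 mult_right_mono[OF Kqb, of \<eta>1] by linarith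
      have sum: "G s - G t1 \<le> (C1 - 1) * \<epsilon> + 2 * (\<epsilon> powr \<alpha> / \<alpha> * \<eta>1)"
      proof -
        define X where "X = \<epsilon> powr \<alpha> / \<alpha> * \<eta>1"
        define I1 where "I1 = integral {0..c} (\<lambda>r. q r * h r)"
        define I2 where "I2 = integral {c..s} (\<lambda>r. q r * h r)"
        have "G s - G t1 = I1 + I2 - A2" using GQ QQ unfolding I1_def I2_def by simp
        moreover have "I1 \<le> (C1 - 1) * \<epsilon>" "I2 \<le> X" "- A2 \<le> X"
          using Q1 Q2 A2b abs_ge_minus_self[of A2] unfolding I1_def I2_def X_def by auto
        ultimately show ?thesis unfolding X_def[symmetric] by linarith
      qed
      have e2: "2 * (\<epsilon> powr \<alpha> / \<alpha> * \<eta>1) = \<eta> / 2 * \<epsilon> powr \<alpha>"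
        using a by (simp add: \<eta>1_def field_simps)
      have pow: "\<epsilon> powr (1 - \<alpha>) < \<eta> / (2 * C1)"
      proof -
        have "\<epsilon> < (\<eta> / (2 * C1)) powr (1 / (1 - \<alpha>))" using sd by (simp add: \<epsilon>_def \<delta>_def)
        then have "\<epsilon> powr (1 - \<alpha>) < ((\<eta> / (2 * C1)) powr (1 / (1 - \<alpha>))) powr (1 - \<alpha>)"
          using a \<epsilon> by (intro powr_less_mono2) auto
        also have "\<dots> = \<eta> / (2 * C1)" using a \<eta> C1 by (simp add: powr_powr)
        finally show ?thesis .
      qed
      have "C1 * \<epsilon> = C1 * (\<epsilon> powr (1 - \<alpha>) * \<epsilon> powr \<alpha>)"
        using \<epsilon> by (simp add: powr_add[symmetric])
      also have "\<dots> \<le> C1 * (\<eta> / (2 * C1) * \<epsilon> powr \<alpha>)"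
        using pow C1 \<epsilon> by (intro mult_left_mono mult_right_mono) auto
      also have "\<dots> = \<eta> / 2 * \<epsilon> powr \<alpha>" using C1 by simp
      finally have "C1 * \<epsilon> \<le> \<eta> / 2 * \<epsilon> powr \<alpha>" .
      then have "G s - G t1 \<le> \<eta> * \<epsilon> powr \<alpha>"
        using sum e2 \<epsilon> by (simp add: algebra_simps)
      then show ?thesis by (simp add: \<epsilon>_def)
    qed
  qed
qed

lemma core:
  fixes \<alpha> t1 :: real and h d :: "real \<Rightarrow> real"
  assumes a: "0 < \<alpha>" "\<alpha> < 1" and t1: "0 < t1" and hc: "continuous_on UNIV h"
    and h0: "h t1 = 0" and dpos: "\<And>s. s \<in> {0..t1} \<Longrightarrow> 0 \<le> d s" and dt1: "d t1 = 0"
    and d0: "0 < d 0"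
    and eq: "\<And>t. t \<in> {0..t1} \<Longrightarrow> ((\<lambda>s. (t - s) powr (\<alpha> - 1) * h s) has_integral Gamma \<alpha> * (d t - d 0)) {0..t}"
  shows False
proof -
  define \<Gamma> where "\<Gamma> = Gamma \<alpha>"
  define B where "B = Beta \<alpha> (1 - \<alpha>)"
  have \<Gamma>: "0 < \<Gamma>" using a by (simp add: \<Gamma>_def Gamma_real_pos)
  have Bpos: "0 < B" using a by (simp add: B_def Beta_def Gamma_real_pos)
  define Pv where "Pv \<tau> = integral {0..\<tau>} (\<lambda>s. (\<tau> - s) powr (-\<alpha>) * d s)" for \<tau>
  have Pfact: "((\<lambda>s. (\<tau> - s) powr (-\<alpha>) * d s) has_integral
      (B * integral {0..\<tau>} h + \<Gamma> * d 0 * (\<tau> powr (1 - \<alpha>) / (1 - \<alpha>))) / \<Gamma>) {0..\<tau>}"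
    if \<tau>: "\<tau> \<in> {0..t1}" for \<tau>
  proof -
    have F1: "((\<lambda>s. (\<tau> - s) powr (-\<alpha>) * integral {0..s} (\<lambda>r. (s - r) powr (\<alpha> - 1) * h r))
          has_integral (B * integral {0..\<tau>} h)) {0..\<tau>}"
      unfolding B_def by (rule fub[OF a _ hc]) (use \<tau> in auto)
    have F2: "((\<lambda>s. (\<tau> - s) powr (-\<alpha>) * (\<Gamma> * (d s - d 0))) has_integral (B * integral {0..\<tau>} h)) {0..\<tau>}"
    proof (rule has_integral_eq[OF _ F1])
      fix s assume "s \<in> {0..\<tau>}"
      then have "s \<in> {0..t1}" using \<tau> by auto
      from integral_unique[OF eq[OF this]]
      show "(\<tau> - s) powr (-\<alpha>) * integral {0..s} (\<lambda>r. (s - r) powr (\<alpha> - 1) * h r) =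
            (\<tau> - s) powr (-\<alpha>) * (\<Gamma> * (d s - d 0))" by (simp add: \<Gamma>_def)
    qed
    have K: "((\<lambda>s. (\<tau> - s) powr (-\<alpha>)) has_integral (\<tau> powr (1 - \<alpha>) / (1 - \<alpha>))) {0..\<tau>}"
      using kernel_int[of 0 \<tau> "1 - \<alpha>"] \<tau> a by simp
    have K2: "((\<lambda>s. \<Gamma> * d 0 * (\<tau> - s) powr (-\<alpha>)) has_integral \<Gamma> * d 0 * (\<tau> powr (1 - \<alpha>) / (1 - \<alpha>))) {0..\<tau>}"
      by (rule has_integral_mult_right[OF K])
    have "((\<lambda>s. ((\<tau> - s) powr (-\<alpha>) * (\<Gamma> * (d s - d 0)) + \<Gamma> * d 0 * (\<tau> - s) powr (-\<alpha>)) / \<Gamma>) has_integral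
      (B * integral {0..\<tau>} h + \<Gamma> * d 0 * (\<tau> powr (1 - \<alpha>) / (1 - \<alpha>))) / \<Gamma>) {0..\<tau>}"
      by (rule has_integral_divide[OF has_integral_add[OF F2 K2]])
    then show ?thesis
      by (rule has_integral_eq[rotated]) (use \<Gamma> in \<open>simp add: field_simps\<close>)
  qed
  have Pv: "\<Gamma> * Pv \<tau> = B * integral {0..\<tau>} h + \<Gamma> * d 0 * (\<tau> powr (1 - \<alpha>) / (1 - \<alpha>))"
    if "\<tau> \<in> {0..t1}" for \<tau>
    using integral_unique[OF Pfact[OF that]] \<Gamma> unfolding Pv_def by (simp add: field_simps)
  define c0 where "c0 = d 0 * t1 powr (-\<alpha>)"
  have c0: "0 < c0" using d0 t1 by (simp add: c0_def)
  define \<eta> where "\<eta> = c0 * (1 - \<alpha>) / 4"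
  define \<eta>' where "\<eta>' = \<Gamma> * c0 / (4 * B)"
  have \<eta>: "0 < \<eta>" using c0 a by (simp add: \<eta>_def)
  have \<eta>': "0 < \<eta>'" using c0 \<Gamma> Bpos by (simp add: \<eta>'_def)
  have eqG: "\<And>t. t \<in> {0..t1} \<Longrightarrow> ((\<lambda>s. (t - s) powr (\<alpha> - 1) * h s) has_integral \<Gamma> * (d t - d 0)) {0..t}"
    using eq unfolding \<Gamma>_def .
  obtain \<delta>1 where \<delta>1: "0 < \<delta>1"
    and E: "\<And>s. s \<in> {0..t1} \<Longrightarrow> t1 - s < \<delta>1 \<Longrightarrow> \<Gamma> * (d s - d 0) - \<Gamma> * (d t1 - d 0) \<le> (\<Gamma> * \<eta>) * (t1 - s) powr \<alpha>"
    using endpoint_est[OF a t1 continuous_on_subset[OF hc] h0 eqG, of "\<Gamma> * \<eta>"] \<Gamma> \<eta> by auto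
  have Ed: "d s \<le> \<eta> * (t1 - s) powr \<alpha>" if "s \<in> {0..t1}" "t1 - s < \<delta>1" for s
  proof -
    have "\<Gamma> * d s \<le> \<Gamma> * (\<eta> * (t1 - s) powr \<alpha>)" using E[OF that] dt1 by (simp add: algebra_simps)
    then show ?thesis using \<Gamma> by simp
  qed
  obtain \<delta>2 where \<delta>2: "0 < \<delta>2" and hs: "\<And>s. dist s t1 < \<delta>2 \<Longrightarrow> dist (h s) (h t1) < \<eta>'"
    using hc \<eta>' unfolding continuous_on_iff by blast
  define \<epsilon> where "\<epsilon> = min (min \<delta>1 \<delta>2) t1 / 2"
  have \<epsilon>: "0 < \<epsilon>" "\<epsilon> < \<delta>1" "\<epsilon> < \<delta>2" "\<epsilon> < t1" using \<delta>1 \<delta>2 t1 by (auto simp: \<epsilon>_def)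
  define \<tau> where "\<tau> = t1 - \<epsilon>"
  have \<tau>: "0 < \<tau>" "\<tau> < t1" "\<tau> \<in> {0..t1}" using \<epsilon> by (auto simp: \<tau>_def)
  have t1m: "t1 \<in> {0..t1}" using t1 by auto
  have hint: "h integrable_on {0..t1}"
    by (rule integrable_continuous_interval[OF continuous_on_subset[OF hc]]) auto
  have hsplit: "integral {0..t1} h = integral {0..\<tau>} h + integral {\<tau>..t1} h"
    using Henstock_Kurzweil_Integration.integral_combine[of 0 \<tau> t1 h] \<tau> hint by simp
  have i: "\<Gamma> * (Pv t1 - Pv \<tau>) = B * integral {\<tau>..t1} h
      + \<Gamma> * d 0 * ((t1 powr (1 - \<alpha>) - \<tau> powr (1 - \<alpha>)) / (1 - \<alpha>))"
    using Pv[OF t1m] Pv[OF \<tau>(3)] hsplit by (simp add: algebra_simps diff_divide_distrib)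
  have ii: "- (\<eta>' * \<epsilon>) \<le> integral {\<tau>..t1} h"
  proof -
    have hi: "(h has_integral integral {\<tau>..t1} h) {\<tau>..t1}"
      by (rule integrable_integral, rule integrable_continuous_interval[OF continuous_on_subset[OF hc]]) auto
    have "norm (integral {\<tau>..t1} h) \<le> \<eta>' * measure lborel {\<tau>..t1}"
    proof (rule has_integral_bound_real[OF _ _ hi, where S="{}"])
      show "0 \<le> \<eta>'" using \<eta>' by simp
      fix s assume "s \<in> {\<tau>..t1} - {}"
      then have "dist s t1 < \<delta>2" using \<epsilon> by (auto simp: dist_real_def \<tau>_def)
      from hs[OF this] show "norm (h s) \<le> \<eta>'" by (simp add: h0)
    qed auto
    then show ?thesis using \<tau> by (simp add: \<tau>_def)
  qed
  have iii: "t1 powr (-\<alpha>) * \<epsilon> \<le> (t1 powr (1 - \<alpha>) - \<tau> powr (1 - \<alpha>)) / (1 - \<alpha>)"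
  proof -
    obtain z where z: "\<tau> < z" "z < t1"
      and zeq: "t1 powr (1 - \<alpha>) - \<tau> powr (1 - \<alpha>) = (t1 - \<tau>) * ((1 - \<alpha>) * z powr (1 - \<alpha> - 1))"
    proof (rule exE[OF MVT2[OF \<tau>(2), of "\<lambda>z. z powr (1 - \<alpha>)" "\<lambda>z. (1 - \<alpha>) * z powr (1 - \<alpha> - 1)"]])
      fix u assume "\<tau> \<le> u" "u \<le> t1"
      then have "0 < u" using \<tau> by simp
      then show "((\<lambda>z. z powr (1 - \<alpha>)) has_real_derivative (1 - \<alpha>) * u powr (1 - \<alpha> - 1)) (at u)"
        by (auto intro!: derivative_eq_intros)
    qed auto
    have "t1 powr (-\<alpha>) \<le> z powr (-\<alpha>)" using z \<tau> a by (intro powr_mono2') auto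
    then have "t1 powr (-\<alpha>) * \<epsilon> \<le> z powr (-\<alpha>) * \<epsilon>" using \<epsilon> by simp
    also have "\<dots> = (t1 powr (1 - \<alpha>) - \<tau> powr (1 - \<alpha>)) / (1 - \<alpha>)"
      using zeq a by (simp add: \<tau>_def field_simps)
    finally show ?thesis .
  qed
  have Pt1: "((\<lambda>s. (t1 - s) powr (-\<alpha>) * d s) has_integral Pv t1) {0..t1}"
    using Pfact[OF t1m] integral_unique[OF Pfact[OF t1m]] unfolding Pv_def by simp
  have Ptau: "((\<lambda>s. (\<tau> - s) powr (-\<alpha>) * d s) has_integral Pv \<tau>) {0..\<tau>}"
    using Pfact[OF \<tau>(3)] integral_unique[OF Pfact[OF \<tau>(3)]] unfolding Pv_def by simp
  have it1: "(\<lambda>s. (t1 - s) powr (-\<alpha>) * d s) integrable_on {0..t1}" using Pt1 by blast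
  have Psplit: "Pv t1 = integral {0..\<tau>} (\<lambda>s. (t1 - s) powr (-\<alpha>) * d s) + integral {\<tau>..t1} (\<lambda>s. (t1 - s) powr (-\<alpha>) * d s)"
    using Henstock_Kurzweil_Integration.integral_combine[OF _ _ it1, of \<tau>] \<tau> integral_unique[OF Pt1] by simp
  have iv1: "integral {0..\<tau>} (\<lambda>s. (t1 - s) powr (-\<alpha>) * d s) \<le> Pv \<tau>"
  proof -
    define g where "g s = (if s = \<tau> then (t1 - s) powr (-\<alpha>) * d s else (\<tau> - s) powr (-\<alpha>) * d s)" for s
    have gi: "(g has_integral Pv \<tau>) {0..\<tau>}"
      by (rule has_integral_spike[OF negligible_sing _ Ptau, of \<tau>]) (auto simp: g_def)
    have fi: "(\<lambda>s. (t1 - s) powr (-\<alpha>) * d s) integrable_on {0..\<tau>}"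
      by (rule integrable_subinterval_real[OF it1]) (use \<tau> in auto)
    show ?thesis
    proof (rule has_integral_le[OF integrable_integral[OF fi] gi])
      fix s assume s: "s \<in> {0..\<tau>}"
      show "(t1 - s) powr (-\<alpha>) * d s \<le> g s"
      proof (cases "s = \<tau>")
        case False
        with s have "0 < \<tau> - s" by auto
        then have "(t1 - s) powr (-\<alpha>) \<le> (\<tau> - s) powr (-\<alpha>)" using a \<tau> by (intro powr_mono2') auto
        moreover have "0 \<le> d s" using s \<tau> by (intro dpos) auto
        ultimately show ?thesis using False by (simp add: g_def mult_right_mono)
      qed (simp add: g_def)
    qed
  qed
  have iv2: "integral {\<tau>..t1} (\<lambda>s. (t1 - s) powr (-\<alpha>) * d s) \<le> \<eta> * \<epsilon> / (1 - \<alpha>)"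
  proof -
    have fi: "(\<lambda>s. (t1 - s) powr (-\<alpha>) * d s) integrable_on {\<tau>..t1}"
      by (rule integrable_subinterval_real[OF it1]) (use \<tau> in auto)
    have K: "((\<lambda>s. (t1 - s) powr (-\<alpha>)) has_integral (\<epsilon> powr (1 - \<alpha>) / (1 - \<alpha>))) {\<tau>..t1}"
      using kernel_int[of \<tau> t1 "1 - \<alpha>"] \<tau> a by (simp add: \<tau>_def)
    have K2: "((\<lambda>s. (t1 - s) powr (-\<alpha>) * (\<eta> * \<epsilon> powr \<alpha>)) has_integral
        (\<epsilon> powr (1 - \<alpha>) / (1 - \<alpha>)) * (\<eta> * \<epsilon> powr \<alpha>)) {\<tau>..t1}"
      by (rule has_integral_mult_left[OF K])
    have "integral {\<tau>..t1} (\<lambda>s. (t1 - s) powr (-\<alpha>) * d s) \<le> (\<epsilon> powr (1 - \<alpha>) / (1 - \<alpha>)) * (\<eta> * \<epsilon> powr \<alpha>)"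
    proof (rule has_integral_le[OF integrable_integral[OF fi] K2])
      fix s assume s: "s \<in> {\<tau>..t1}"
      have sm: "s \<in> {0..t1}" using s \<tau> by auto
      have "d s \<le> \<eta> * (t1 - s) powr \<alpha>" using Ed[OF sm] s \<epsilon> by (simp add: \<tau>_def)
      also have "\<dots> \<le> \<eta> * \<epsilon> powr \<alpha>" using s \<eta> a by (intro mult_left_mono powr_mono2) (auto simp: \<tau>_def)
      finally show "(t1 - s) powr (-\<alpha>) * d s \<le> (t1 - s) powr (-\<alpha>) * (\<eta> * \<epsilon> powr \<alpha>)"
        by (intro mult_left_mono) auto
    qed
    also have "\<dots> = \<eta> * (\<epsilon> powr (1 - \<alpha>) * \<epsilon> powr \<alpha>) / (1 - \<alpha>)" by (simp add: field_simps)
    also have "\<epsilon> powr (1 - \<alpha>) * \<epsilon> powr \<alpha> = \<epsilon>" using \<epsilon> by (simp add: powr_add[symmetric])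
    finally show ?thesis .
  qed
  have iv: "Pv t1 - Pv \<tau> \<le> \<eta> * \<epsilon> / (1 - \<alpha>)" using Psplit iv1 iv2 by linarith
  have "\<Gamma> * d 0 * (t1 powr (-\<alpha>) * \<epsilon>) \<le> \<Gamma> * d 0 * ((t1 powr (1 - \<alpha>) - \<tau> powr (1 - \<alpha>)) / (1 - \<alpha>))"
    using iii \<Gamma> d0 by (intro mult_left_mono) auto
  moreover have "B * (- (\<eta>' * \<epsilon>)) \<le> B * integral {\<tau>..t1} h" using ii Bpos by (intro mult_left_mono) auto
  moreover have "\<Gamma> * (Pv t1 - Pv \<tau>) \<le> \<Gamma> * (\<eta> * \<epsilon> / (1 - \<alpha>))" using iv \<Gamma> by (intro mult_left_mono) auto
  ultimately have "\<Gamma> * d 0 * (t1 powr (-\<alpha>) * \<epsilon>) - B * (\<eta>' * \<epsilon>) \<le> \<Gamma> * (\<eta> * \<epsilon> / (1 - \<alpha>))"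
    using i by linarith
  moreover have "\<Gamma> * d 0 * (t1 powr (-\<alpha>) * \<epsilon>) = \<Gamma> * c0 * \<epsilon>" by (simp add: c0_def)
  moreover have "B * (\<eta>' * \<epsilon>) = \<Gamma> * c0 * \<epsilon> / 4" using Bpos by (simp add: \<eta>'_def)
  moreover have "\<Gamma> * (\<eta> * \<epsilon> / (1 - \<alpha>)) = \<Gamma> * c0 * \<epsilon> / 4"
  proof -
    have "1 - \<alpha> \<noteq> 0" using a by simp
    then show ?thesis by (simp add: \<eta>_def field_simps)
  qed
  ultimately have "\<Gamma> * c0 * \<epsilon> \<le> \<Gamma> * c0 * \<epsilon> / 2" by linarith
  moreover have "0 < \<Gamma> * c0 * \<epsilon>" using \<Gamma> c0 \<epsilon> by simp
  ultimately show False by linarith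
qed

lemma main_aux:
  fixes \<alpha> T :: real and J :: "real set"
    and f :: "real \<Rightarrow> real \<Rightarrow> real" and x1 x2 :: "real \<Rightarrow> real"
  assumes alpha: "0 < \<alpha>" "\<alpha> < 1"
    and J: "(0 < T \<and> J = {0..T}) \<or> J = {0..}"
    and f_cont: "continuous_on (J \<times> UNIV) (\<lambda>(t, x). f t x)"
    and sol1: "caputo_solution \<alpha> f J x1"
    and sol2: "caputo_solution \<alpha> f J x2"
    and init: "x2 0 < x1 0"
  shows "\<forall>t\<in>J. x1 t \<noteq> x2 t"
proof (intro ballI notI)
  fix t assume tJ: "t \<in> J" and eqt: "x1 t = x2 t"
  have Jsub: "{0..s} \<subseteq> J" if "s \<in> J" for s using J that by auto
  have t0: "0 \<le> t" using J tJ by auto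
  have x1c: "continuous_on J x1" and x2c: "continuous_on J x2"
    using sol1 sol2 by (auto simp: caputo_solution_def)
  define D where "D s = x1 s - x2 s" for s
  have Dc: "continuous_on J D" unfolding D_def using x1c x2c by (intro continuous_intros)
  define Z where "Z = {s \<in> {0..t}. D s = 0}"
  have Zcl: "closed Z" unfolding Z_def
    by (rule continuous_closed_preimage_constant[OF continuous_on_subset[OF Dc Jsub[OF tJ]]]) auto
  have tZ: "t \<in> Z" using t0 eqt by (simp add: Z_def D_def)
  define t1 where "t1 = Inf Z"
  have t1Z: "t1 \<in> Z" unfolding t1_def
    by (rule closed_contains_Inf[OF _ _ Zcl]) (use tZ in \<open>auto simp: Z_def bdd_below_def\<close>)
  have Dt1: "D t1 = 0" and t1r: "0 \<le> t1" "t1 \<le> t" using t1Z by (auto simp: Z_def)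
  have t1pos: "0 < t1"
  proof (rule ccontr)
    assume "\<not> 0 < t1"
    then have "t1 = 0" using t1r by simp
    then show False using Dt1 init by (simp add: D_def)
  qed
  have t1J: "t1 \<in> J" using Jsub[OF tJ] t1r by auto
  have J01: "{0..t1} \<subseteq> J" using Jsub[OF t1J] .
  have Dnz: "D s \<noteq> 0" if "0 \<le> s" "s < t1" for s
  proof
    assume "D s = 0"
    then have "s \<in> Z" using that t1r by (simp add: Z_def)
    then have "t1 \<le> s" unfolding t1_def by (rule cInf_lower) (auto simp: bdd_below_def Z_def)
    then show False using that by simp
  qed
  have Dpos: "0 \<le> D s" if s: "s \<in> {0..t1}" for s
  proof (rule ccontr)
    assume neg: "\<not> 0 \<le> D s"
    have Dcs: "continuous_on {0..s} D"
      by (rule continuous_on_subset[OF Dc]) (use s J01 in auto)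
    have "\<exists>z. 0 \<le> z \<and> z \<le> s \<and> D z = 0"
      by (rule IVT2'[OF _ _ _ Dcs]) (use neg init s in \<open>auto simp: D_def\<close>)
    then obtain z where z: "0 \<le> z" "z \<le> s" "D z = 0" by blast
    have "z < t1" using z s neg Dt1 by (cases "z = t1") auto
    with Dnz z show False by auto
  qed
  define H where "H s = f s (x1 s) - f s (x2 s)" for s
  have f1c: "continuous_on J (\<lambda>s. f s (x1 s))"
  proof -
    have "continuous_on J (\<lambda>s. (s, x1 s))" using x1c by (intro continuous_intros)
    moreover have "(\<lambda>s. (s, x1 s)) ` J \<subseteq> J \<times> UNIV" by auto
    ultimately show ?thesis using continuous_on_compose2[OF f_cont, of J "\<lambda>s. (s, x1 s)"] by simp
  qed
  have f2c: "continuous_on J (\<lambda>s. f s (x2 s))"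
  proof -
    have "continuous_on J (\<lambda>s. (s, x2 s))" using x2c by (intro continuous_intros)
    moreover have "(\<lambda>s. (s, x2 s)) ` J \<subseteq> J \<times> UNIV" by auto
    ultimately show ?thesis using continuous_on_compose2[OF f_cont, of J "\<lambda>s. (s, x2 s)"] by simp
  qed
  have Hc: "continuous_on J H" unfolding H_def using f1c f2c by (intro continuous_intros)
  define cl where "cl r = max 0 (min t1 r)" for r
  define hx where "hx r = H (cl r)" for r
  have hxc: "continuous_on UNIV hx" unfolding hx_def
  proof (rule continuous_on_compose2[OF continuous_on_subset[OF Hc J01]])
    show "continuous_on UNIV cl" unfolding cl_def by (intro continuous_intros)
    show "cl ` UNIV \<subseteq> {0..t1}" using t1pos by (auto simp: cl_def)
  qed
  have hxeq: "hx r = H r" if "r \<in> {0..t1}" for r using that by (simp add: hx_def cl_def)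
  have h0: "hx t1 = 0" using hxeq[of t1] t1pos eqt Dt1 by (simp add: H_def D_def)
  have eqn: "((\<lambda>s. (\<tau> - s) powr (\<alpha> - 1) * hx s) has_integral Gamma \<alpha> * (D \<tau> - D 0)) {0..\<tau>}"
    if \<tau>: "\<tau> \<in> {0..t1}" for \<tau>
  proof -
    have \<tau>J: "\<tau> \<in> J" using J01 \<tau> by auto
    have I1: "((\<lambda>s. (\<tau> - s) powr (\<alpha> - 1) * f s (x1 s)) has_integral (Gamma \<alpha> * (x1 \<tau> - x1 0))) {0..\<tau>}"
      using sol1 \<tau>J by (simp add: caputo_solution_def)
    have I2: "((\<lambda>s. (\<tau> - s) powr (\<alpha> - 1) * f s (x2 s)) has_integral (Gamma \<alpha> * (x2 \<tau> - x2 0))) {0..\<tau>}"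
      using sol2 \<tau>J by (simp add: caputo_solution_def)
    have "((\<lambda>s. (\<tau> - s) powr (\<alpha> - 1) * f s (x1 s) - (\<tau> - s) powr (\<alpha> - 1) * f s (x2 s)) has_integral
        (Gamma \<alpha> * (x1 \<tau> - x1 0) - Gamma \<alpha> * (x2 \<tau> - x2 0))) {0..\<tau>}"
      by (rule has_integral_diff[OF I1 I2])
    then show ?thesis
    proof (rule has_integral_eq_rhs[OF has_integral_eq[rotated]])
      fix s assume "s \<in> {0..\<tau>}"
      then have "s \<in> {0..t1}" using \<tau> by auto
      then show "(\<tau> - s) powr (\<alpha> - 1) * f s (x1 s) - (\<tau> - s) powr (\<alpha> - 1) * f s (x2 s) =
        (\<tau> - s) powr (\<alpha> - 1) * hx s" by (simp add: hxeq H_def right_diff_distrib)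
    qed (simp add: D_def algebra_simps)
  qed
  show False
    by (rule core[OF alpha t1pos hxc h0 Dpos Dt1 _ eqn]) (use init in \<open>auto simp: D_def\<close>)
qed

theorem mainTheorem1:
  fixes \<alpha> T :: real and J :: "real set"
    and f :: "real \<Rightarrow> real \<Rightarrow> real" and L :: "real \<Rightarrow> real"
    and x1 x2 :: "real \<Rightarrow> real"
  assumes alpha: "0 < \<alpha>" "\<alpha> < 1"
    and J: "(0 < T \<and> J = {0..T}) \<or> J = {0..}"
    and f_cont: "continuous_on (J \<times> UNIV) (\<lambda>(t, x). f t x)"
    and L_cont: "continuous_on J L"
    and L_nonneg: "\<And>t. t \<in> J \<Longrightarrow> 0 \<le> L t"
    and lip: "\<And>t x y. t \<in> J \<Longrightarrow> \<bar>f t x - f t y\<bar> \<le> L t * \<bar>x - y\<bar>"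
    and sol1: "caputo_solution \<alpha> f J x1"
    and sol2: "caputo_solution \<alpha> f J x2"
    and init: "x1 0 \<noteq> x2 0"
  shows "\<forall>t\<in>J. x1 t \<noteq> x2 t"
proof (cases "x2 0 < x1 0")
  case True
  show ?thesis by (rule main_aux[OF alpha J f_cont sol1 sol2 True])
next
  case False
  with init have "x1 0 < x2 0" by simp
  from main_aux[OF alpha J f_cont sol2 sol1 this] show ?thesis by auto
qed

end
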